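(* Let $f_1,\ldots,f_{KN}$ be drawn i.i.d. from a distribution $\mathcal{F}$ over types, let $\widehat{p}(\mathbf{b}^{(i)})=\frac1N\sum_{\tau=1}^N\mathbb{1}\{b_{f_{(i-1)N+\tau}}(\mathbf{x}^{(\mathbf{b}^{(i)})})=a^{(\mathbf{b}^{(i)})}\}$ for $i\in[K]$, and $\widehat{p}(\mathbf{w})=\sum_{i=1}^K\lambda_i(\mathbf{w})\widehat{p}(\mathbf{b}^{(i)})$ for $\mathbf{w}\in\mathcal{W}$. Let $p(\mathbf{w})=\sum_{i=1}^K\mathbf{w}[i]\Pr_{f\sim\mathcal{F}}(f=\alpha^{(i)})$. Then for any sequence of mixed strategies $\mathbf{x}_{NK+1},\ldots,\mathbf{x}_T$, with probability at least $1-\frac1T$, $$\sum_{t=NK+1}^T\sum_{a_f\in\mathcal{A}_f}\big|\widehat{p}(\mathbb{1}_{(\sigma^{(\mathbf{x}_t)}=a_f)})-p(\mathbb{1}_{(\sigma^{(\mathbf{x}_t)}=a_f)})\big|\le 2A_fT\sqrt{\frac{K\log T}{N}}.$$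
   Context: Finite leader actions $\mathcal{A}$, finite follower actions $\mathcal{A}_f$ with $A_f=|\mathcal{A}_f|$, follower types $\alpha^{(1)},\ldots,\alpha^{(K)}$ with context-independent utilities $u_{\alpha^{(i)}}:\mathcal{A}\times\mathcal{A}_f\to[0,1]$; for $\mathbf{x}\in\Delta(\mathcal{A})$, $b_f(\mathbf{x})\in\arg\max_{a_f}\sum_{a_l}\mathbf{x}[a_l]u_f(a_l,a_f)$, ties broken by a fixed ordering. $\sigma^{(\mathbf{x})}$ maps $\alpha^{(i)}\mapsto b_{\alpha^{(i)}}(\mathbf{x})$; $\Sigma=\{\sigma^{(\mathbf{x})}\}$. For $\sigma\in\Sigma$, $a_f\in\mathcal{A}_f$, $\mathbb{1}_{(\sigma=a_f)}\in\{0,1\}^K$ has $i$-th entry $\mathbb{1}\{\sigma(\alpha^{(i)})=a_f\}$; $\mathcal{W}$ is the set of these vectors. $\mathcal{B}=\{\mathbf{b}^{(1)},\ldots,\mathbf{b}^{(K)}\}\subseteq\mathcal{W}$ is a barycentric spanner (each $\mathbf{w}\in\mathcal{W}$ equals $\sum_i\lambda_i(\mathbf{w})\mathbf{b}^{(i)}$ with $\lambda_i(\mathbf{w})\in[-1,1]$), and $\mathbf{x}^{(\mathbf{b})},a^{(\mathbf{b})}$ satisfy $\mathbf{b}=\mathbb{1}_{(\sigma^{(\mathbf{x}^{(\mathbf{b})})}=a^{(\mathbf{b})})}$. Here $T\ge KN$. *)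

theory Defs
  imports "HOL-Probability.Probability"
begin

definition mixed_strategies :: "('l::finite \<Rightarrow> real) set" where
  "mixed_strategies = {x. (\<forall>a. 0 \<le> x a) \<and> (\<Sum>a\<in>UNIV. x a) = 1}"

definition exp_util :: "('l::finite \<Rightarrow> 'f \<Rightarrow> real) \<Rightarrow> ('l \<Rightarrow> real) \<Rightarrow> 'f \<Rightarrow> real" where
  "exp_util u x af = (\<Sum>al\<in>UNIV. x al * u al af)"

definition best_resp :: "('l::finite \<Rightarrow> 'f::{finite,linorder} \<Rightarrow> real) \<Rightarrow> ('l \<Rightarrow> real) \<Rightarrow> 'f" where
  "best_resp u x = (LEAST af. \<forall>af'. exp_util u x af' \<le> exp_util u x af)"

text \<open>The indicator vector 1_(sigma^(x) = af) in {0,1}^K, types indexed by 0..K-1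
  (entries outside {..<K} are 0).\<close>
definition resp_vec :: "(nat \<Rightarrow> 'l::finite \<Rightarrow> 'f::{finite,linorder} \<Rightarrow> real) \<Rightarrow> nat \<Rightarrow> ('l \<Rightarrow> real) \<Rightarrow> 'f \<Rightarrow> (nat \<Rightarrow> real)" where
  "resp_vec u K x af = (\<lambda>j. if j < K \<and> best_resp (u j) x = af then 1 else 0)"

definition resp_vecs :: "(nat \<Rightarrow> 'l::finite \<Rightarrow> 'f::{finite,linorder} \<Rightarrow> real) \<Rightarrow> nat \<Rightarrow> (nat \<Rightarrow> real) set" where
  "resp_vecs u K = {resp_vec u K x af | x af. x \<in> mixed_strategies}"

end

theory Submission
  imports Defs
begin

lemma sum_reindex_divmod:
  fixes h :: "nat \<Rightarrow> nat \<Rightarrow> real"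
  assumes "N > 0"
  shows "(\<Sum>k<K*N. h (k div N) (k mod N)) = (\<Sum>i<K. \<Sum>\<tau><N. h i \<tau>)"
proof -
  have "(\<Sum>k<K*N. h (k div N) (k mod N)) = (\<Sum>i<K. \<Sum>k\<in>{i*N..<i*N+N}. h (k div N) (k mod N))"
    by (rule sum.nat_group[symmetric])
  also have "\<dots> = (\<Sum>i<K. \<Sum>\<tau><N. h i \<tau>)"
  proof (rule sum.cong[OF refl])
    fix i
    have "(\<Sum>k\<in>{i*N..<i*N+N}. h (k div N) (k mod N)) = (\<Sum>\<tau>\<in>{0..<N}. h ((\<tau> + i*N) div N) ((\<tau> + i*N) mod N))"
    proof -
      have "(\<Sum>k\<in>{0+i*N..<N+i*N}. h (k div N) (k mod N)) = (\<Sum>\<tau>\<in>{0..<N}. h ((\<tau> + i*N) div N) ((\<tau> + i*N) mod N))"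
        by (rule sum.shift_bounds_nat_ivl)
      then show ?thesis by (simp add: add.commute)
    qed
    also have "\<dots> = (\<Sum>\<tau><N. h i \<tau>)"
      using assms by (intro sum.cong) auto
    finally show "(\<Sum>k\<in>{i*N..<i*N+N}. h (k div N) (k mod N)) = (\<Sum>\<tau><N. h i \<tau>)" .
  qed
  finally show ?thesis .
qed

lemma hoeff_one:
  fixes c :: "nat \<Rightarrow> real" and g :: "nat \<Rightarrow> nat \<Rightarrow> real" and D :: "nat pmf"
  assumes c: "\<forall>i<K. \<bar>c i\<bar> \<le> 1" and g: "\<And>i j. g i j = 0 \<or> g i j = 1"
    and K: "K \<ge> 1" and N: "N \<ge> 1" and eps: "\<epsilon> \<ge> 0"
  shows "measure_pmf.prob (Pi_pmf {..<K*N} 0 (\<lambda>_. D))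
     {f. \<bar>(\<Sum>i<K. c i * ((1 / real N) * (\<Sum>\<tau><N. g i (f (i*N+\<tau>))))) - (\<Sum>i<K. c i * measure_pmf.expectation D (g i))\<bar> \<ge> \<epsilon>}
     \<le> 2 * exp (-2 * \<epsilon>\<^sup>2 * real N / real K)"
proof -
  define P where "P = Pi_pmf {..<K*N} 0 (\<lambda>_. D)"
  define X where "X = (\<lambda>k (f::nat\<Rightarrow>nat). c (k div N) / real N * g (k div N) (f k))"
  define a where "a = (\<lambda>k. min 0 (c (k div N)) / real N)"
  define b where "b = (\<lambda>k. a k + 1 / real N)"
  have fin: "finite {..<K*N}" by simp
  have indep0: "prob_space.indep_vars (measure_pmf P) (\<lambda>_. count_space UNIV) (\<lambda>x f. f x) {..<K*N}"
    unfolding P_def by (rule indep_vars_Pi_pmf) simp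
  have indep1: "prob_space.indep_vars (measure_pmf P) (\<lambda>_. borel)
     (\<lambda>k x. (\<lambda>k j. c (k div N) / real N * g (k div N) j) k ((\<lambda>x f. f x) k x)) {..<K*N}"
    by (rule prob_space.indep_vars_compose2[OF measure_pmf.prob_space_axioms indep0]) auto
  have indep: "prob_space.indep_vars (measure_pmf P) (\<lambda>_. borel) X {..<K*N}"
    using indep1 unfolding X_def by simp
  interpret H: Hoeffding_ineq "measure_pmf P" "{..<K*N}" X a b "\<Sum>k\<in>{..<K*N}. measure_pmf.expectation P (X k)"
  proof unfold_locales
    show "finite {..<K*N}" by simp
    show "prob_space.indep_vars (measure_pmf P) (\<lambda>_. borel) X {..<K*N}" by (rule indep)
    fix k assume k: "k \<in> {..<K*N}"
    have "k div N < K" using k by (simp add: less_mult_imp_div_less)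
    then have ck: "\<bar>c (k div N)\<bar> \<le> 1" using c by auto
    show "AE x in measure_pmf P. X k x \<in> {a k..b k}"
    proof (rule AE_I2)
      fix x
      have "X k x \<in> {a k..b k}" if "g (k div N) (x k) = 0"
        using that N ck unfolding X_def a_def b_def by (auto simp: min_def divide_simps)
      moreover have "X k x \<in> {a k..b k}" if "g (k div N) (x k) = 1"
        using that N ck unfolding X_def a_def b_def by (auto simp: min_def divide_simps)
      ultimately show "X k x \<in> {a k..b k}" using g by blast
    qed
  qed
  have sq: "(\<Sum>k\<in>{..<K*N}. (b k - a k)\<^sup>2) = real K / real N"
    using N by (simp add: b_def power2_eq_square divide_simps)
  have sumX: "(\<Sum>k\<in>{..<K*N}. X k f) = (\<Sum>i<K. c i * ((1 / real N) * (\<Sum>\<tau><N. g i (f (i*N+\<tau>)))))" for f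
  proof -
    have "(\<Sum>k\<in>{..<K*N}. X k f) = (\<Sum>k<K*N. (\<lambda>i \<tau>. c i / real N * g i (f (i*N+\<tau>))) (k div N) (k mod N))"
      unfolding X_def by (intro sum.cong) (auto simp: div_mult_mod_eq)
    also have "\<dots> = (\<Sum>i<K. \<Sum>\<tau><N. c i / real N * g i (f (i*N+\<tau>)))"
      using N by (intro sum_reindex_divmod) simp
    finally show ?thesis by (simp add: sum_distrib_left)
  qed
  have EX: "measure_pmf.expectation P (X k) = c (k div N) / real N * measure_pmf.expectation D (g (k div N))"
    if k: "k \<in> {..<K*N}" for k
  proof -
    have "measure_pmf.expectation P (X k) = measure_pmf.expectation (map_pmf (\<lambda>f. f k) P) (\<lambda>j. c (k div N) / real N * g (k div N) j)"
      unfolding X_def by simp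
    also have "map_pmf (\<lambda>f. f k) P = D" unfolding P_def using k by (subst Pi_pmf_component) auto
    finally show ?thesis by simp
  qed
  have mu: "(\<Sum>k\<in>{..<K*N}. measure_pmf.expectation P (X k)) = (\<Sum>i<K. c i * measure_pmf.expectation D (g i))"
  proof -
    have "(\<Sum>k\<in>{..<K*N}. measure_pmf.expectation P (X k)) = (\<Sum>k<K*N. (\<lambda>i \<tau>. c i / real N * measure_pmf.expectation D (g i)) (k div N) (k mod N))"
      by (intro sum.cong) (auto simp: EX)
    also have "\<dots> = (\<Sum>i<K. \<Sum>\<tau><N. c i / real N * measure_pmf.expectation D (g i))"
      using N by (intro sum_reindex_divmod) simp
    finally show ?thesis using N by simp
  qed
  have Hb: "measure_pmf.prob P {x \<in> space (measure_pmf P). \<bar>(\<Sum>k\<in>{..<K*N}. X k x) - (\<Sum>k\<in>{..<K*N}. measure_pmf.expectation P (X k))\<bar> \<ge> \<epsilon>}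
        \<le> 2 * exp (-2 * \<epsilon>\<^sup>2 / (\<Sum>k\<in>{..<K*N}. (b k - a k)\<^sup>2))"
    by (rule H.Hoeffding_ineq_abs_ge[OF eps]) (use sq K N in simp)
  have set_eq: "{x \<in> space (measure_pmf P). \<bar>(\<Sum>k\<in>{..<K*N}. X k x) - (\<Sum>k\<in>{..<K*N}. measure_pmf.expectation P (X k))\<bar> \<ge> \<epsilon>}
     = {f. \<bar>(\<Sum>i<K. c i * ((1 / real N) * (\<Sum>\<tau><N. g i (f (i*N+\<tau>))))) - (\<Sum>i<K. c i * measure_pmf.expectation D (g i))\<bar> \<ge> \<epsilon>}"
    unfolding sumX mu by simp
  have ex_eq: "-2 * \<epsilon>\<^sup>2 / (\<Sum>k\<in>{..<K*N}. (b k - a k)\<^sup>2) = -2 * \<epsilon>\<^sup>2 * real N / real K"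
    unfolding sq by (rule divide_divide_eq_right)
  have "measure_pmf.prob P {f. \<bar>(\<Sum>i<K. c i * ((1 / real N) * (\<Sum>\<tau><N. g i (f (i*N+\<tau>))))) - (\<Sum>i<K. c i * measure_pmf.expectation D (g i))\<bar> \<ge> \<epsilon>}
     \<le> 2 * exp (-2 * \<epsilon>\<^sup>2 * real N / real K)"
    using Hb by (simp only: set_eq ex_eq)
  then show ?thesis by (simp only: P_def)
qed

theorem mainTheorem10:
  fixes u :: "nat \<Rightarrow> 'l::finite \<Rightarrow> 'f::{finite,linorder} \<Rightarrow> real"
    and K N T :: nat
    and D :: "nat pmf"
    and xb :: "nat \<Rightarrow> ('l \<Rightarrow> real)" and ab :: "nat \<Rightarrow> 'f"
    and lam :: "(nat \<Rightarrow> real) \<Rightarrow> nat \<Rightarrow> real"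
    and xs :: "nat \<Rightarrow> ('l \<Rightarrow> real)"
  assumes K_pos: "K \<ge> 1" and N_pos: "N \<ge> 1" and T_ge: "T \<ge> K * N"
    and u_range: "\<And>i al af. i < K \<Longrightarrow> 0 \<le> u i al af \<and> u i al af \<le> 1"
    and D_supp: "set_pmf D \<subseteq> {..<K}"
    and xb_mixed: "\<And>i. i < K \<Longrightarrow> xb i \<in> mixed_strategies"
    and spanner: "\<And>w. w \<in> resp_vecs u K \<Longrightarrow>
        (\<forall>i<K. \<bar>lam w i\<bar> \<le> 1) \<and>
        w = (\<lambda>j. \<Sum>i<K. lam w i * resp_vec u K (xb i) (ab i) j)"
    and xs_mixed: "\<And>t. K * N + 1 \<le> t \<Longrightarrow> t \<le> T \<Longrightarrow> xs t \<in> mixed_strategies"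
  shows "measure_pmf.prob (Pi_pmf {..<K * N} 0 (\<lambda>_. D))
     {f. let phat_b = (\<lambda>i. (1 / real N) *
                 (\<Sum>\<tau><N. if best_resp (u (f (i * N + \<tau>))) (xb i) = ab i then 1 else 0));
             phat = (\<lambda>w. \<Sum>i<K. lam w i * phat_b i);
             p = (\<lambda>w. \<Sum>i<K. w i * pmf D i)
         in (\<Sum>t\<in>{K * N + 1..T}. \<Sum>af\<in>UNIV.
                \<bar>phat (resp_vec u K (xs t) af) - p (resp_vec u K (xs t) af)\<bar>)
            \<le> 2 * real CARD('f) * real T * sqrt (real K * ln (real T) / real N)}
     \<ge> 1 - 1 / real T"
  proof -
  have KN1: "1 \<le> K * N" using K_pos N_pos by (simp add: Suc_le_eq)
  have T1: "T \<ge> 1" using T_ge KN1 by linarith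
  have "K * 1 \<le> K * N" using N_pos by (rule mult_le_mono2)
  then have KT: "K \<le> T" using T_ge by linarith
  show ?thesis
  proof (cases "T = 1")
    case True
    then have "1 - 1 / real T = 0" by simp
    then show ?thesis by (simp only:) (rule measure_nonneg)
  next
    case False
    with T1 have T2: "T \<ge> 2" by simp
    define \<epsilon> where "\<epsilon> = 2 * sqrt (real K * ln (real T) / real N)"
    define g where "g = (\<lambda>i j. if best_resp (u j) (xb i) = ab i then 1 else (0::real))"
    define phat where "phat = (\<lambda>w f. \<Sum>i<K. lam w i * ((1 / real N) * (\<Sum>\<tau><N. g i (f (i*N+\<tau>)))))"
    define p where "p = (\<lambda>w. \<Sum>i<K. w i * pmf D i)"
    define S where "S = (\<lambda>(t,af). resp_vec u K (xs t) af) ` ({K*N+1..T} \<times> (UNIV::'f set))"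
    define Bad where "Bad = (\<lambda>w. {f. \<epsilon> \<le> \<bar>phat w f - p w\<bar>})"
    define P where "P = Pi_pmf {..<K * N} 0 (\<lambda>_. D)"
    have lnT: "ln (real T) > 0" using T2 by simp
    have eps0: "\<epsilon> \<ge> 0" unfolding \<epsilon>_def using lnT by simp
    have S_W: "S \<subseteq> resp_vecs u K"
      unfolding S_def resp_vecs_def using xs_mixed by auto
    have finS: "finite S" unfolding S_def by simp
    have pw: "p w = (\<Sum>i<K. lam w i * measure_pmf.expectation D (g i))" if w: "w \<in> resp_vecs u K" for w
    proof -
      have wj: "w j = (\<Sum>i<K. lam w i * resp_vec u K (xb i) (ab i) j)" for j
        using fun_cong[OF conjunct2[OF spanner[OF w]], of j] by simp
      have Eg: "measure_pmf.expectation D (g i) = (\<Sum>j<K. g i j * pmf D j)" for i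
        by (rule integral_measure_pmf_real) (use D_supp in auto)
      have "p w = (\<Sum>j<K. (\<Sum>i<K. lam w i * resp_vec u K (xb i) (ab i) j) * pmf D j)"
        unfolding p_def using wj by simp
      also have "\<dots> = (\<Sum>j<K. \<Sum>i<K. lam w i * (g i j * pmf D j))"
        by (intro sum.cong refl) (auto simp: sum_distrib_right resp_vec_def g_def mult.assoc intro!: sum.cong)
      also have "\<dots> = (\<Sum>i<K. lam w i * (\<Sum>j<K. g i j * pmf D j))"
        by (subst sum.swap) (simp add: sum_distrib_left)
      finally show ?thesis by (simp add: Eg)
    qed
    have expval: "exp (-2 * \<epsilon>\<^sup>2 * real N / real K) = 1 / real T ^ 8"
    proof -
      have "\<epsilon>\<^sup>2 = 4 * (real K * ln (real T) / real N)"
        unfolding \<epsilon>_def using lnT by (simp add: power_mult_distrib)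
      then have "-2 * \<epsilon>\<^sup>2 * real N / real K = - (8 * ln (real T))"
        using K_pos N_pos by (simp add: field_simps)
      moreover have "exp (real 8 * ln (real T)) = exp (ln (real T)) ^ 8" by (rule exp_of_nat_mult)
      then have e8: "exp (8 * ln (real T)) = real T ^ 8" using T2 by simp
      ultimately show ?thesis by (simp only: exp_minus inverse_eq_divide)
    qed
    have bad_bound: "measure_pmf.prob P (Bad w) \<le> 2 / real T ^ 8" if w: "w \<in> S" for w
    proof -
      have wW: "w \<in> resp_vecs u K" using w S_W by auto
      have c: "\<forall>i<K. \<bar>lam w i\<bar> \<le> 1" using spanner[OF wW] by blast
      have gg: "\<And>i j. g i j = 0 \<or> g i j = 1" unfolding g_def by auto
      have "Bad w = {f. \<epsilon> \<le> \<bar>(\<Sum>i<K. lam w i * ((1 / real N) * (\<Sum>\<tau><N. g i (f (i*N+\<tau>))))) - (\<Sum>i<K. lam w i * measure_pmf.expectation D (g i))\<bar>}"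
        unfolding Bad_def phat_def pw[OF wW] by simp
      also have "measure_pmf.prob P \<dots> \<le> 2 * exp (-2 * \<epsilon>\<^sup>2 * real N / real K)"
        unfolding P_def by (rule hoeff_one[OF c gg K_pos N_pos eps0])
      finally show ?thesis by (simp only: expval)
    qed
    have cardS: "real (card S) \<le> 2 * real T ^ 2"
    proof -
      define S' where "S' = insert (\<lambda>_. 0) ((\<lambda>(t,j). resp_vec u K (xs t) (best_resp (u j) (xs t))) ` ({K*N+1..T} \<times> {..<K}))"
      have sub: "S \<subseteq> S'"
      proof
        fix w assume "w \<in> S"
        then obtain t af where t: "t \<in> {K*N+1..T}" and w: "w = resp_vec u K (xs t) af"
          unfolding S_def by auto
        show "w \<in> S'"
        proof (cases "\<exists>j<K. best_resp (u j) (xs t) = af")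
          case True
          then obtain j where "j < K" "best_resp (u j) (xs t) = af" by blast
          then show ?thesis unfolding S'_def w using t by force
        next
          case False
          then have "w = (\<lambda>_. 0)" unfolding w resp_vec_def by auto
          then show ?thesis unfolding S'_def by simp
        qed
      qed
      have "card S \<le> card S'" using sub unfolding S'_def by (intro card_mono) auto
      also have "\<dots> \<le> Suc (card ((\<lambda>(t,j). resp_vec u K (xs t) (best_resp (u j) (xs t))) ` ({K*N+1..T} \<times> {..<K})))"
        unfolding S'_def by (simp add: card_insert_if)
      also have "\<dots> \<le> Suc (card ({K*N+1..T} \<times> {..<K}))"
        by (simp only: Suc_le_mono) (rule card_image_le, simp)
      also have "\<dots> = Suc ((T - K*N) * K)" by (simp add: card_cartesian_product)
      also have "\<dots> \<le> Suc (T * T)" using KT by (simp add: mult_le_mono)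
      finally have "card S \<le> Suc (T * T)" .
      then have "real (card S) \<le> real (Suc (T * T))" by (rule of_nat_mono)
      then have "real (card S) \<le> 1 + real T * real T" by simp
      also have "\<dots> \<le> 2 * real T ^ 2"
      proof -
        have "(1::real) \<le> real T" using T2 by simp
        then have "1 * 1 \<le> real T * real T" by (intro mult_mono) auto
        then show ?thesis by (simp add: power2_eq_square)
      qed
      finally show ?thesis .
    qed
    have good: "UNIV - (\<Union>w\<in>S. Bad w) \<subseteq>
      {f. let phat_b = (\<lambda>i. (1 / real N) *
                 (\<Sum>\<tau><N. if best_resp (u (f (i * N + \<tau>))) (xb i) = ab i then 1 else 0));
             phat = (\<lambda>w. \<Sum>i<K. lam w i * phat_b i);
             p = (\<lambda>w. \<Sum>i<K. w i * pmf D i)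
         in (\<Sum>t\<in>{K * N + 1..T}. \<Sum>af\<in>UNIV.
                \<bar>phat (resp_vec u K (xs t) af) - p (resp_vec u K (xs t) af)\<bar>)
            \<le> 2 * real CARD('f) * real T * sqrt (real K * ln (real T) / real N)}"
    proof
      fix f assume f: "f \<in> UNIV - (\<Union>w\<in>S. Bad w)"
      have each: "\<bar>phat (resp_vec u K (xs t) af) f - p (resp_vec u K (xs t) af)\<bar> \<le> \<epsilon>"
        if "t \<in> {K*N+1..T}" for t af
      proof -
        have "resp_vec u K (xs t) af \<in> S" unfolding S_def using that by force
        then show ?thesis using f unfolding Bad_def by auto
      qed
      have "(\<Sum>t\<in>{K * N + 1..T}. \<Sum>af\<in>UNIV. \<bar>phat (resp_vec u K (xs t) af) f - p (resp_vec u K (xs t) af)\<bar>)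
          \<le> (\<Sum>t\<in>{K * N + 1..T}. \<Sum>af\<in>(UNIV::'f set). \<epsilon>)"
        by (intro sum_mono each) auto
      also have "\<dots> = real (T - K*N) * real CARD('f) * \<epsilon>" by simp
      also have "\<dots> \<le> real T * real CARD('f) * \<epsilon>"
        using eps0 by (intro mult_right_mono) auto
      also have "\<dots> = 2 * real CARD('f) * real T * sqrt (real K * ln (real T) / real N)"
        unfolding \<epsilon>_def by simp
      finally show "f \<in> {f. let phat_b = (\<lambda>i. (1 / real N) *
                 (\<Sum>\<tau><N. if best_resp (u (f (i * N + \<tau>))) (xb i) = ab i then 1 else 0));
             phat = (\<lambda>w. \<Sum>i<K. lam w i * phat_b i);
             p = (\<lambda>w. \<Sum>i<K. w i * pmf D i)
         in (\<Sum>t\<in>{K * N + 1..T}. \<Sum>af\<in>UNIV.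
                \<bar>phat (resp_vec u K (xs t) af) - p (resp_vec u K (xs t) af)\<bar>)
            \<le> 2 * real CARD('f) * real T * sqrt (real K * ln (real T) / real N)}"
        unfolding phat_def p_def g_def Let_def by simp
    qed
    have "measure_pmf.prob P (\<Union>w\<in>S. Bad w) \<le> (\<Sum>w\<in>S. measure_pmf.prob P (Bad w))"
      by (rule measure_pmf.finite_measure_subadditive_finite[OF finS]) auto
    also have "\<dots> \<le> (\<Sum>w\<in>S. 2 / real T ^ 8)" by (intro sum_mono bad_bound)
    also have "\<dots> = real (card S) * (2 / real T ^ 8)" by simp
    also have "\<dots> \<le> 2 * real T ^ 2 * (2 / real T ^ 8)" by (intro mult_right_mono cardS) simp
    also have "\<dots> \<le> 1 / real T"
    proof -
      have "(4::real) \<le> real T ^ 5"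
      proof -
        have "(2::real) ^ 5 \<le> real T ^ 5" using T2 by (intro power_mono) auto
        then show ?thesis by simp
      qed
      then have "4 * real T \<le> real T ^ 5 * real T" using T2 by (intro mult_right_mono) auto
      moreover have "real T ^ 5 * real T = real T ^ 6" using power_add[of "real T" 5 1] by simp
      ultimately have h4: "4 * real T \<le> real T ^ 6" by simp
      have h8: "real T ^ 8 = real T ^ 2 * real T ^ 6" by (simp flip: power_add)
      have Tp: "real T > 0" using T2 by simp
      have "2 * real T ^ 2 * (2 / real T ^ 8) = 4 / real T ^ 6"
        using Tp unfolding h8 by (simp add: field_simps)
      also have "\<dots> \<le> 1 / real T" using Tp h4 by (simp add: divide_simps)
      finally show ?thesis .
    qed
    finally have pb: "measure_pmf.prob P (\<Union>w\<in>S. Bad w) \<le> 1 / real T" .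
    have "measure_pmf.prob P (UNIV - (\<Union>w\<in>S. Bad w)) = 1 - measure_pmf.prob P (\<Union>w\<in>S. Bad w)"
      using measure_pmf.prob_compl[of "\<Union>w\<in>S. Bad w" P] by simp
    also have "\<dots> \<ge> 1 - 1 / real T" using pb by simp
    finally show ?thesis
      using measure_pmf.finite_measure_mono[OF good, of P] unfolding P_def by simp
  qed
qed

end
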